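(* Consider a two-player zero-sum matrix game with action sets $\mathcal{A}=\{1,\dots,m\}$ and $\mathcal{B}=\{1,\dots,n\}$, a known feature map $\phi:\mathcal{A}\times\mathcal{B}\to\mathbb{R}^d$ with $\|\phi(a,b)\|_2\le L$ for all $(a,b)$, and an unknown parameter $\theta^*\in\mathbb{R}^d$ with $\|\theta^*\|_2=1$, so that the payoff matrix is $Q(a,b)=\langle\phi(a,b),\theta^*\rangle$. Let $\tau^*>0$ and let $(\mu^*,\nu^* )$ be the quantal response equilibrium (QRE) of this game at temperature $\tau^*$. Write $X^*=X(\mu^*,\nu^* )$ and $y^*=y(\mu^*,\nu^* )$. Then the pair $(\theta^*,\tau^* )$ is uniquely identifiable from $(\mu^*,\nu^* )$, i.e. it is the unique pair $(\theta,\tau)\in\mathbb{R}^d\times(0,\infty)$ with $\|\theta\|_2=1$ and $X^*\theta=\tau y^*$, if and only if both of the following hold: (1) (Rank condition) $\operatorname{rank}(X^* )=d$; (2) (Non-uniformity condition) $y^*\neq 0$.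
   Context: For $\tau>0$ and a payoff matrix $Q\in\mathbb{R}^{m\times n}$, the entropy-regularized game is $\max_{\mu\in\Delta(\mathcal{A})}\min_{\nu\in\Delta(\mathcal{B})}\{\mu^\top Q\nu+\tau\mathcal{H}(\mu)-\tau\mathcal{H}(\nu)\}$ with Shannon entropy $\mathcal{H}(\pi)=-\sum_i\pi_i\log\pi_i$; its unique solution $(\mu^*,\nu^* )$ is the QRE, characterized by $\mu^*(a)\propto\exp(Q(a,\cdot)\nu^*/\tau)$ and $\nu^*(b)\propto\exp(-Q(\cdot,b)^\top\mu^*/\tau)$. For full-support distributions $\mu\in\Delta(\mathcal{A}),\nu\in\Delta(\mathcal{B})$ define $A(\nu)\in\mathbb{R}^{(m-1)\times d}$ with row $a-1$ (for $a=2,\dots,m$) equal to $\sum_{b'\in\mathcal{B}}\nu(b')(\phi(a,b')-\phi(1,b'))^\top$; $B(\mu)\in\mathbb{R}^{(n-1)\times d}$ with row $b-1$ (for $b=2,\dots,n$) equal to $\sum_{a'\in\mathcal{A}}\mu(a')(\phi(a',1)-\phi(a',b))^\top$; $c(\mu)\in\mathbb{R}^{m-1}$ with $c(\mu)_{a-1}=\log(\mu(a)/\mu(1))$; $d(\nu)\in\mathbb{R}^{n-1}$ with $d(\nu)_{b-1}=\log(\nu(b)/\nu(1))$. Set $X(\mu,\nu)=[A(\nu)^\top,B(\mu)^\top]^\top\in\mathbb{R}^{(m+n-2)\times d}$ and $y(\mu,\nu)=[c(\mu)^\top,d(\nu)^\top]^\top\in\mathbb{R}^{m+n-2}$. The QRE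 satisfies $X(\mu^*,\nu^* )\theta^*=\tau^*y(\mu^*,\nu^* )$. *)

theory Defs
  imports "HOL-Analysis.Analysis"
begin

text \<open>Actions are indexed A = {1..m}, B = {1..n}; vectors in R^d are real^'d.\<close>

definition payoff :: "(nat \<Rightarrow> nat \<Rightarrow> real^'d) \<Rightarrow> real^'d \<Rightarrow> nat \<Rightarrow> nat \<Rightarrow> real" where
  "payoff phi \<theta> a b = phi a b \<bullet> \<theta>"

definition is_QRE :: "nat \<Rightarrow> nat \<Rightarrow> (nat \<Rightarrow> nat \<Rightarrow> real) \<Rightarrow> real \<Rightarrow> (nat \<Rightarrow> real) \<Rightarrow> (nat \<Rightarrow> real) \<Rightarrow> bool" where
  "is_QRE m n Q \<tau> \<mu> \<nu> \<longleftrightarrow>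
     (\<forall>a\<in>{1..m}. \<mu> a = exp ((\<Sum>b=1..n. Q a b * \<nu> b) / \<tau>)
                         / (\<Sum>a'=1..m. exp ((\<Sum>b=1..n. Q a' b * \<nu> b) / \<tau>))) \<and>
     (\<forall>b\<in>{1..n}. \<nu> b = exp (- (\<Sum>a=1..m. Q a b * \<mu> a) / \<tau>)
                         / (\<Sum>b'=1..n. exp (- (\<Sum>a=1..m. Q a b' * \<mu> a) / \<tau>)))"

text \<open>Row r (0-based, r < m+n-2) of X(mu,nu): first the m-1 rows of A(nu), then the n-1 rows of B(mu).\<close>
definition Xrow :: "nat \<Rightarrow> nat \<Rightarrow> (nat \<Rightarrow> nat \<Rightarrow> real^'d) \<Rightarrow> (nat \<Rightarrow> real) \<Rightarrow> (nat \<Rightarrow> real) \<Rightarrow> nat \<Rightarrow> real^'d" where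
  "Xrow m n phi \<mu> \<nu> r =
     (if r < m - 1
      then (\<Sum>b'=1..n. \<nu> b' *\<^sub>R (phi (r + 2) b' - phi 1 b'))
      else (\<Sum>a'=1..m. \<mu> a' *\<^sub>R (phi a' 1 - phi a' (r - (m - 1) + 2))))"

definition yvec :: "nat \<Rightarrow> nat \<Rightarrow> (nat \<Rightarrow> real) \<Rightarrow> (nat \<Rightarrow> real) \<Rightarrow> nat \<Rightarrow> real" where
  "yvec m n \<mu> \<nu> r =
     (if r < m - 1 then ln (\<mu> (r + 2) / \<mu> 1)
      else ln (\<nu> (r - (m - 1) + 2) / \<nu> 1))"

definition rankX :: "nat \<Rightarrow> nat \<Rightarrow> (nat \<Rightarrow> nat \<Rightarrow> real^'d) \<Rightarrow> (nat \<Rightarrow> real) \<Rightarrow> (nat \<Rightarrow> real) \<Rightarrow> nat" where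
  "rankX m n phi \<mu> \<nu> = dim (Xrow m n phi \<mu> \<nu> ` {..<m + n - 2})"

end

theory Submission
  imports Defs
begin

lemma qre_identity:
  fixes m n :: nat and phi :: "nat \<Rightarrow> nat \<Rightarrow> real^'d"
    and \<theta>s :: "real^'d" and \<tau>s :: real and \<mu>s \<nu>s :: "nat \<Rightarrow> real"
  assumes m1: "m \<ge> 1" and n1: "n \<ge> 1" and tp: "\<tau>s > 0"
    and q: "is_QRE m n (payoff phi \<theta>s) \<tau>s \<mu>s \<nu>s"
    and r: "r < m + n - 2"
  shows "Xrow m n phi \<mu>s \<nu>s r \<bullet> \<theta>s = \<tau>s * yvec m n \<mu>s \<nu>s r"
proof (cases "r < m - 1")
  case True
  define S where "S a = (\<Sum>b=1..n. payoff phi \<theta>s a b * \<nu>s b)" for a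
  define Z where "Z = (\<Sum>a'=1..m. exp (S a' / \<tau>s))"
  have Zp: "Z > 0" unfolding Z_def using m1 by (intro sum_pos) auto
  have mu: "\<mu>s a = exp (S a / \<tau>s) / Z" if "a \<in> {1..m}" for a
    using q that unfolding is_QRE_def S_def Z_def by blast
  have a2: "r + 2 \<in> {1..m}" using True by auto
  have a1: "1 \<in> {1..m}" using m1 by auto
  have "\<mu>s (r+2) / \<mu>s 1 = exp ((S (r+2) - S 1) / \<tau>s)"
    unfolding mu[OF a2] mu[OF a1] using Zp by (simp add: exp_diff diff_divide_distrib)
  hence y: "yvec m n \<mu>s \<nu>s r = (S (r+2) - S 1) / \<tau>s"
    using True by (simp add: yvec_def)
  have "Xrow m n phi \<mu>s \<nu>s r \<bullet> \<theta>s = S (r+2) - S 1"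
    using True by (simp add: Xrow_def S_def payoff_def inner_sum_left inner_diff_left
        sum_subtractf[symmetric] algebra_simps)
  thus ?thesis using y tp by simp
next
  case False
  define S where "S b = (\<Sum>a=1..m. payoff phi \<theta>s a b * \<mu>s a)" for b
  define Z where "Z = (\<Sum>b'=1..n. exp (- S b' / \<tau>s))"
  have Zp: "Z > 0" unfolding Z_def using n1 by (intro sum_pos) auto
  have nu: "\<nu>s b = exp (- S b / \<tau>s) / Z" if "b \<in> {1..n}" for b
    using q that unfolding is_QRE_def S_def Z_def by blast
  have b2: "r - (m - 1) + 2 \<in> {1..n}" using False r by auto
  have b1: "1 \<in> {1..n}" using n1 by auto
  have "\<nu>s (r - (m - 1) + 2) / \<nu>s 1 = exp ((S 1 - S (r - (m - 1) + 2)) / \<tau>s)"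
    unfolding nu[OF b2] nu[OF b1] using Zp by (simp add: exp_diff diff_divide_distrib exp_minus field_simps)
  hence y: "yvec m n \<mu>s \<nu>s r = (S 1 - S (r - (m - 1) + 2)) / \<tau>s"
    using False by (simp add: yvec_def)
  have "Xrow m n phi \<mu>s \<nu>s r \<bullet> \<theta>s = S 1 - S (r - (m - 1) + 2)"
    using False by (simp add: Xrow_def S_def payoff_def inner_sum_left inner_diff_left
        sum_subtractf[symmetric] algebra_simps)
  thus ?thesis using y tp by simp
qed

theorem theorem1:
  fixes m n :: nat and phi :: "nat \<Rightarrow> nat \<Rightarrow> real^'d" and L :: real
    and \<theta>s :: "real^'d" and \<tau>s :: real and \<mu>s \<nu>s :: "nat \<Rightarrow> real"
  assumes "m \<ge> 1" and "n \<ge> 1"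
    and "\<forall>a\<in>{1..m}. \<forall>b\<in>{1..n}. norm (phi a b) \<le> L"
    and "norm \<theta>s = 1"
    and "\<tau>s > 0"
    and "is_QRE m n (payoff phi \<theta>s) \<tau>s \<mu>s \<nu>s"
  shows "(\<forall>\<theta> \<tau>. (\<tau> > 0 \<and> norm \<theta> = 1 \<and>
              (\<forall>r<m + n - 2. Xrow m n phi \<mu>s \<nu>s r \<bullet> \<theta> = \<tau> * yvec m n \<mu>s \<nu>s r))
            \<longleftrightarrow> (\<theta> = \<theta>s \<and> \<tau> = \<tau>s))
         \<longleftrightarrow> (rankX m n phi \<mu>s \<nu>s = CARD('d) \<and> (\<exists>r<m + n - 2. yvec m n \<mu>s \<nu>s r \<noteq> 0))"
proof -
  define X where "X = Xrow m n phi \<mu>s \<nu>s"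
  define Y where "Y = yvec m n \<mu>s \<nu>s"
  define R where "R = X ` {..<m + n - 2}"
  note tp = \<open>\<tau>s > 0\<close> and nt = \<open>norm \<theta>s = 1\<close>
  have star: "\<forall>r<m + n - 2. X r \<bullet> \<theta>s = \<tau>s * Y r"
    using qre_identity[OF assms(1,2,5,6)] unfolding X_def Y_def by blast
  have rk: "rankX m n phi \<mu>s \<nu>s = dim R" unfolding rankX_def R_def X_def by simp
  have ts0: "\<theta>s \<noteq> 0" using nt by auto
  show ?thesis unfolding X_def[symmetric] Y_def[symmetric] rk
  proof
    assume U: "\<forall>\<theta> \<tau>. (\<tau> > 0 \<and> norm \<theta> = 1 \<and> (\<forall>r<m + n - 2. X r \<bullet> \<theta> = \<tau> * Y r))
            \<longleftrightarrow> (\<theta> = \<theta>s \<and> \<tau> = \<tau>s)"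
    have Yne: "\<exists>r<m + n - 2. Y r \<noteq> 0"
    proof (rule ccontr)
      assume "\<not> ?thesis"
      hence "\<forall>r<m + n - 2. X r \<bullet> \<theta>s = (2*\<tau>s) * Y r" using star by auto
      hence "\<theta>s = \<theta>s \<and> 2*\<tau>s = \<tau>s" using U tp nt by (metis mult_pos_pos zero_less_numeral)
      thus False using tp by simp
    qed
    then obtain r0 where r0: "r0 < m + n - 2" "Y r0 \<noteq> 0" by blast
    have "dim R = CARD('d)"
    proof (rule ccontr)
      assume "dim R \<noteq> CARD('d)"
      moreover have "dim R \<le> CARD('d)" by (rule dim_subset_UNIV_cart)
      ultimately have "dim R < DIM(real^'d)" by simp
      then obtain v :: "real^'d" where v: "v \<noteq> 0" "\<And>y. y \<in> span R \<Longrightarrow> orthogonal v y"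
        using orthogonal_to_subspace_exists by blast
      have Xv: "X r \<bullet> v = 0" if "r < m + n - 2" for r
        using v(2)[of "X r"] that unfolding R_def orthogonal_def
        by (simp add: span_base inner_commute)
      define w where "w = \<theta>s + v"
      have vnp: "v \<noteq> c *\<^sub>R \<theta>s" for c
      proof
        assume vc: "v = c *\<^sub>R \<theta>s"
        have "X r0 \<bullet> v = c * (\<tau>s * Y r0)" using star r0 vc by simp
        hence "c = 0" using Xv[OF r0(1)] tp r0 by simp
        thus False using vc v by simp
      qed
      have w0: "w \<noteq> 0"
      proof
        assume "w = 0" hence "v = (-1) *\<^sub>R \<theta>s" unfolding w_def by (simp add: eq_neg_iff_add_eq_0 add.commute)
        thus False using vnp by blast
      qed
      hence nw: "norm w > 0" by simp
      define th where "th = (1 / norm w) *\<^sub>R w"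
      define ta where "ta = \<tau>s / norm w"
      have "ta > 0 \<and> norm th = 1 \<and> (\<forall>r<m + n - 2. X r \<bullet> th = ta * Y r)"
        using nw tp star Xv unfolding th_def ta_def w_def
        by (simp add: inner_add_right)
      hence "th = \<theta>s" using U by blast
      hence "w = norm w *\<^sub>R \<theta>s" using nw unfolding th_def by auto
      hence "v = (norm w - 1) *\<^sub>R \<theta>s" unfolding w_def by (simp add: algebra_simps)
      thus False using vnp by blast
    qed
    thus "dim R = CARD('d) \<and> (\<exists>r<m + n - 2. Y r \<noteq> 0)" using Yne by blast
  next
    assume H: "dim R = CARD('d) \<and> (\<exists>r<m + n - 2. Y r \<noteq> 0)"
    have sp: "span R = UNIV" using H dim_eq_full[of R] by simp
    have inj: "u = 0" if "\<forall>r<m + n - 2. X r \<bullet> u = 0" for u :: "real^'d"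
    proof -
      have "orthogonal u a" for a
      proof (rule orthogonal_to_span)
        show "a \<in> span R" using sp by simp
        show "orthogonal u y" if "y \<in> R" for y
          using that \<open>\<forall>r<m + n - 2. X r \<bullet> u = 0\<close> unfolding R_def orthogonal_def
          by (auto simp: inner_commute)
      qed
      hence "u \<bullet> u = 0" unfolding orthogonal_def by blast
      thus ?thesis by simp
    qed
    show "\<forall>\<theta> \<tau>. (\<tau> > 0 \<and> norm \<theta> = 1 \<and> (\<forall>r<m + n - 2. X r \<bullet> \<theta> = \<tau> * Y r))
            \<longleftrightarrow> (\<theta> = \<theta>s \<and> \<tau> = \<tau>s)"
    proof (intro allI iffI)
      fix \<theta> \<tau> assume A: "\<tau> > 0 \<and> norm \<theta> = 1 \<and> (\<forall>r<m + n - 2. X r \<bullet> \<theta> = \<tau> * Y r)"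
      have "\<forall>r<m + n - 2. X r \<bullet> (\<tau>s *\<^sub>R \<theta> - \<tau> *\<^sub>R \<theta>s) = 0"
        using A star by (simp add: inner_diff_right)
      hence "\<tau>s *\<^sub>R \<theta> - \<tau> *\<^sub>R \<theta>s = 0" by (rule inj)
      hence e: "\<tau>s *\<^sub>R \<theta> = \<tau> *\<^sub>R \<theta>s" by simp
      hence "norm (\<tau>s *\<^sub>R \<theta>) = norm (\<tau> *\<^sub>R \<theta>s)" by simp
      hence "\<tau>s = \<tau>" using A tp nt by simp
      thus "\<theta> = \<theta>s \<and> \<tau> = \<tau>s" using e tp by simp
    next
      fix \<theta> \<tau> assume "\<theta> = \<theta>s \<and> \<tau> = \<tau>s"
      thus "\<tau> > 0 \<and> norm \<theta> = 1 \<and> (\<forall>r<m + n - 2. X r \<bullet> \<theta> = \<tau> * Y r)"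
        using tp nt star by simp
    qed
  qed
qed

end
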